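(* Let $G$ be a connected graph with $n\geq 3$ vertices. If $G$ has $k>0$ basis forced vertices, then $|E(G)|\leq \frac{n(n-1)}{2}-2k$.
   Context: All graphs are finite and simple. For vertices $u,v$ of a connected graph $G$, $d(u,v)$ is the length of a shortest $u$–$v$ path. A set $R\subseteq V(G)$ is a resolving set if for all distinct $x,y\in V(G)$ there is $r\in R$ with $d(r,x)\neq d(r,y)$. The metric dimension $\dim(G)$ is the minimum cardinality of a resolving set, and a resolving set of cardinality $\dim(G)$ is a metric basis. A vertex is a basis forced vertex if it belongs to every metric basis of $G$. *)

theory Defs
  imports Main
begin

definition simple_graph :: "'a set \<Rightarrow> 'a set set \<Rightarrow> bool" where
  "simple_graph V E \<longleftrightarrow> finite V \<and> (\<forall>e\<in>E. e \<subseteq> V \<and> card e = 2)"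

fun is_walk :: "'a set \<Rightarrow> 'a set set \<Rightarrow> 'a list \<Rightarrow> bool" where
  "is_walk V E [] = False"
| "is_walk V E [v] = (v \<in> V)"
| "is_walk V E (u # v # xs) = ({u, v} \<in> E \<and> u \<in> V \<and> is_walk V E (v # xs))"

text \<open>There is a u-v walk with exactly k edges.\<close>
definition walk_len :: "'a set \<Rightarrow> 'a set set \<Rightarrow> 'a \<Rightarrow> 'a \<Rightarrow> nat \<Rightarrow> bool" where
  "walk_len V E u v k \<longleftrightarrow> (\<exists>p. is_walk V E p \<and> hd p = u \<and> last p = v \<and> length p = Suc k)"

definition connected_graph :: "'a set \<Rightarrow> 'a set set \<Rightarrow> bool" where
  "connected_graph V E \<longleftrightarrow> V \<noteq> {} \<and> (\<forall>u\<in>V. \<forall>v\<in>V. \<exists>k. walk_len V E u v k)"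

definition gdist :: "'a set \<Rightarrow> 'a set set \<Rightarrow> 'a \<Rightarrow> 'a \<Rightarrow> nat" where
  "gdist V E u v = (LEAST k. walk_len V E u v k)"

definition resolving_set :: "'a set \<Rightarrow> 'a set set \<Rightarrow> 'a set \<Rightarrow> bool" where
  "resolving_set V E R \<longleftrightarrow> R \<subseteq> V \<and>
     (\<forall>x\<in>V. \<forall>y\<in>V. x \<noteq> y \<longrightarrow> (\<exists>r\<in>R. gdist V E r x \<noteq> gdist V E r y))"

definition metric_dim :: "'a set \<Rightarrow> 'a set set \<Rightarrow> nat" where
  "metric_dim V E = (LEAST k. \<exists>R. resolving_set V E R \<and> card R = k)"

definition metric_basis :: "'a set \<Rightarrow> 'a set set \<Rightarrow> 'a set \<Rightarrow> bool" where
  "metric_basis V E R \<longleftrightarrow> resolving_set V E R \<and> card R = metric_dim V E"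

definition basis_forced :: "'a set \<Rightarrow> 'a set set \<Rightarrow> 'a \<Rightarrow> bool" where
  "basis_forced V E v \<longleftrightarrow> v \<in> V \<and> (\<forall>R. metric_basis V E R \<longrightarrow> v \<in> R)"

definition forced_vertices :: "'a set \<Rightarrow> 'a set set \<Rightarrow> 'a set" where
  "forced_vertices V E = {v. basis_forced V E v}"

end

theory Submission imports Defs begin
lemma walk_len0: "walk_len V E u v 0 \<longleftrightarrow> u = v \<and> u \<in> V"
proof
  assume "walk_len V E u v 0"
  then obtain p where "is_walk V E p" "hd p = u" "last p = v" "length p = 1"
    unfolding walk_len_def by auto
  then show "u = v \<and> u \<in> V" by (cases p) auto
next
  assume "u = v \<and> u \<in> V"
  then show "walk_len V E u v 0" unfolding walk_len_def by (intro exI[of _ "[u]"]) auto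
qed

lemma walk_len1: "walk_len V E u v 1 \<longleftrightarrow> {u,v} \<in> E \<and> u \<in> V \<and> v \<in> V"
proof
  assume "walk_len V E u v 1"
  then obtain p where "is_walk V E p" "hd p = u" "last p = v" "length p = 2"
    unfolding walk_len_def by auto
  then show "{u,v} \<in> E \<and> u \<in> V \<and> v \<in> V"
    by (cases p; cases "tl p") (auto simp: numeral_2_eq_2)
next
  assume "{u,v} \<in> E \<and> u \<in> V \<and> v \<in> V"
  then show "walk_len V E u v 1" unfolding walk_len_def by (intro exI[of _ "[u,v]"]) auto
qed

lemma gd_ex:
  assumes "connected_graph V E" "u \<in> V" "v \<in> V"
  shows "walk_len V E u v (gdist V E u v)"
  using assms unfolding connected_graph_def gdist_def by (metis LeastI_ex)

lemma gd0:
  assumes "connected_graph V E" "u \<in> V" "v \<in> V"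
  shows "gdist V E u v = 0 \<longleftrightarrow> u = v"
proof
  assume "gdist V E u v = 0"
  then show "u = v" using gd_ex[OF assms] walk_len0 by metis
next
  assume "u = v"
  then have "walk_len V E u v 0" using walk_len0 assms by metis
  then show "gdist V E u v = 0" unfolding gdist_def by (metis Least_le le_zero_eq)
qed

lemma gd1:
  assumes "connected_graph V E" "u \<in> V" "v \<in> V"
  shows "gdist V E u v = 1 \<longleftrightarrow> u \<noteq> v \<and> {u,v} \<in> E"
proof
  assume h: "gdist V E u v = 1"
  then have "u \<noteq> v" using gd0[OF assms] by auto
  moreover have "{u,v} \<in> E" using gd_ex[OF assms] h walk_len1 by metis
  ultimately show "u \<noteq> v \<and> {u,v} \<in> E" by auto
next
  assume h: "u \<noteq> v \<and> {u,v} \<in> E"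
  then have "walk_len V E u v 1" using walk_len1 assms by metis
  then have "gdist V E u v \<le> 1" unfolding gdist_def by (metis Least_le)
  moreover have "gdist V E u v \<noteq> 0" using gd0[OF assms] h by auto
  ultimately show "gdist V E u v = 1" by auto
qed

lemma core:
  fixes d :: "'a \<Rightarrow> 'a \<Rightarrow> nat"
  assumes d0: "\<And>x y. x\<in>V \<Longrightarrow> y\<in>V \<Longrightarrow> d x y = 0 \<longleftrightarrow> x = y"
  and d1: "\<And>x y. x\<in>V \<Longrightarrow> y\<in>V \<Longrightarrow> d x y = 1 \<longleftrightarrow> x \<noteq> y \<and> {x,y}\<in>E"
  and RV: "R \<subseteq> V" and vR: "v\<in>R"
  and res: "\<And>x y. x\<in>V \<Longrightarrow> y\<in>V \<Longrightarrow> x\<noteq>y \<Longrightarrow> \<exists>r\<in>R. d r x \<noteq> d r y"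
  and nS: "\<exists>x\<in>V. \<exists>y\<in>V. x\<noteq>y \<and> (\<forall>r\<in>R-{v}. d r x = d r y)"
  and nSu: "\<And>u. u\<in>V-R \<Longrightarrow> \<exists>x\<in>V. \<exists>y\<in>V. x\<noteq>y \<and> (\<forall>r\<in>R-{v}. d r x = d r y) \<and> d u x = d u y"
  and w: "\<And>u. u\<in>V-R \<Longrightarrow> {v,u}\<notin>E \<Longrightarrow> u = w"
  shows False
proof -
  define eqv where "eqv x y \<longleftrightarrow> (\<forall>r\<in>R-{v}. d r x = d r y)" for x y
  define Nb where "Nb x \<longleftrightarrow> x \<in> V - R \<and> {v,x} \<in> E" for x
  define W where "W \<longleftrightarrow> w \<in> V - R \<and> {v,w} \<notin> E"
  have vV: "v \<in> V" using RV vR by auto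
  have esym: "eqv x y \<Longrightarrow> eqv y x" for x y unfolding eqv_def by auto
  have etr: "eqv x y \<Longrightarrow> eqv y z \<Longrightarrow> eqv x z" for x y z unfolding eqv_def by auto
  have notS: "x \<notin> R - {v}" if "x\<in>V" "y\<in>V" "x\<noteq>y" "eqv x y" for x y
  proof
    assume "x \<in> R - {v}"
    then have "d x x = d x y" using that unfolding eqv_def by auto
    then show False using d0 that by metis
  qed
  have dv: "d v x \<noteq> d v y" if "x\<in>V" "y\<in>V" "x\<noteq>y" "eqv x y" for x y
    using res[OF that(1-3)] that(4) unfolding eqv_def by blast
  have dvv: "d v v = 0" using d0 vV by auto
  have cls: "x = v \<or> Nb x \<or> (x = w \<and> W)" if "x \<in> V" "x \<notin> R - {v}" for x
    using that w unfolding Nb_def W_def by blast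
  have dNb: "Nb x \<Longrightarrow> d v x = 1" for x using d1 vV vR unfolding Nb_def by auto
  have dW: "W \<Longrightarrow> d v w \<noteq> 1 \<and> d v w \<noteq> 0" using d1 d0 vV vR unfolding W_def by auto
  have NbV: "Nb x \<Longrightarrow> x \<in> V \<and> x \<noteq> v" for x using vR unfolding Nb_def by auto
  have WV: "W \<Longrightarrow> w \<in> V \<and> w \<noteq> v" using vR unfolding W_def by auto
  have K: "False" if "Nb x" "Nb y" "x \<noteq> y" "eqv x y" for x y
    using dv[of x y] dNb that NbV by metis
  have pairs: "(p = v \<and> Nb q \<and> eqv v q) \<or> (Nb p \<and> q = v \<and> eqv v p) \<or> (p = v \<and> q = w \<and> W \<and> eqv v w)
     \<or> (p = w \<and> q = v \<and> W \<and> eqv v w) \<or> (p = w \<and> Nb q \<and> W \<and> eqv w q) \<or> (Nb p \<and> q = w \<and> W \<and> eqv w p)"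
    if "p \<in> V" "q \<in> V" "p \<noteq> q" "eqv p q" for p q
  proof -
    have "p \<notin> R - {v}" "q \<notin> R - {v}" using notS that esym by metis+
    then have "p = v \<or> Nb p \<or> (p = w \<and> W)" "q = v \<or> Nb q \<or> (q = w \<and> W)" using cls that by auto
    then show ?thesis using K[of p q] that esym by metis
  qed
  have uv: "p \<noteq> u \<and> q \<noteq> u" if "u \<in> V" "p\<in>V" "q\<in>V" "p \<noteq> q" "d u p = d u q" for u p q
    using d0 that by metis
  show False
  proof (cases "\<exists>a. Nb a \<and> eqv v a")
    case True
    then obtain a where a: "Nb a" "eqv v a" by auto
    have aV: "a \<in> V" "a \<notin> R" "a \<noteq> v" using a NbV unfolding Nb_def by auto
    have uniqa: "b = a" if "Nb b" "eqv v b" for b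
      using K[of a b] a that esym etr by metis
    have dav: "d a v = 1" using d1 aV vV a unfolding Nb_def by (auto simp: insert_commute)
    have Hw: False if "W" "{a,w} \<in> E"
    proof -
      have wV: "w \<in> V - R" "w \<noteq> v" "w \<noteq> a" using that WV a(1) unfolding W_def Nb_def by auto
      obtain p q where pq: "p\<in>V" "q\<in>V" "p\<noteq>q" "eqv p q" "d w p = d w q"
        using nSu[OF wV(1)] unfolding eqv_def by blast
      have "p \<noteq> w" "q \<noteq> w" using uv[of w p q] pq wV by auto
      then have "(p = v \<and> q = a) \<or> (p = a \<and> q = v)" using pairs[OF pq(1-4)] uniqa by metis
      moreover have "d w a = 1" using d1 wV aV that by (auto simp: insert_commute)
      moreover have "d w v \<noteq> 1" using d1 wV vV that unfolding W_def by (auto simp: insert_commute)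
      ultimately show False using pq by auto
    qed
    obtain p q where pq: "p\<in>V" "q\<in>V" "p\<noteq>q" "eqv p q" "d a p = d a q"
      using nSu[of a] aV unfolding eqv_def by blast
    have pqa: "p \<noteq> a" "q \<noteq> a" using uv[of a p q] pq aV by auto
    have "(\<exists>x. W \<and> eqv v w \<and> x = v \<and> d a v = d a w) \<or> (\<exists>b. W \<and> Nb b \<and> eqv w b \<and> b \<noteq> a \<and> d a b = d a w)"
      using pairs[OF pq(1-4)] pq(5) pqa uniqa by metis
    then show False
    proof
      assume "\<exists>x. W \<and> eqv v w \<and> x = v \<and> d a v = d a w"
      then have "W" "d a w = 1" using dav by auto
      then show False using Hw d1 aV WV by auto
    next
      assume "\<exists>b. W \<and> Nb b \<and> eqv w b \<and> b \<noteq> a \<and> d a b = d a w"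
      then obtain b where b: "W" "Nb b" "eqv w b" "b \<noteq> a" "d a b = d a w" by auto
      have bV: "b \<in> V - R" "b \<noteq> v" using b NbV unfolding Nb_def by auto
      have nvw: "\<not> eqv v w" using b uniqa etr by metis
      show False
      proof (cases "{a,b} \<in> E")
        case True
        then have "d a b = 1" using d1[of a b] aV(1) bV(1) b(4) True by blast
        then have "d a w = 1" using b by simp
        then show False using Hw b d1 aV WV by auto
      next
        case False
        obtain p q where pq: "p\<in>V" "q\<in>V" "p\<noteq>q" "eqv p q" "d b p = d b q"
          using nSu[of b] bV unfolding eqv_def by blast
        have pqb: "p \<noteq> b" "q \<noteq> b" using uv[of b p q] pq bV by auto
        have uniqb: "c = b" if "Nb c" "eqv w c" for c
          using K[of b c] b that esym etr by metis
        have "(p = v \<and> q = a) \<or> (p = a \<and> q = v)"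
          using pairs[OF pq(1-4)] pqb uniqa uniqb nvw esym by metis
        moreover have "d b a \<noteq> 1" using d1 aV bV False b by (auto simp: insert_commute)
        moreover have "d b v = 1" using d1 bV vV b unfolding Nb_def by (auto simp: insert_commute)
        ultimately show False using pq by auto
      qed
    qed
  next
    case False
    obtain x y where xy: "x\<in>V" "y\<in>V" "x\<noteq>y" "eqv x y" using nS unfolding eqv_def by blast
    have Wt: "W" using pairs[OF xy] False by metis
    have wV: "w \<in> V - R" "w \<noteq> v" using Wt WV unfolding W_def by auto
    show False
    proof (cases "eqv v w")
      case True
      obtain p q where pq: "p\<in>V" "q\<in>V" "p\<noteq>q" "eqv p q" "d w p = d w q"
        using nSu[OF wV(1)] unfolding eqv_def by blast
      have "p \<noteq> w" "q \<noteq> w" using uv[of w p q] pq wV by auto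
      then show False using pairs[OF pq(1-4)] False by metis
    next
      case nvw: False
      obtain b where b: "Nb b" "eqv w b" using pairs[OF xy] False nvw esym by metis
      have bV: "b \<in> V - R" using b unfolding Nb_def by auto
      have uniqb: "c = b" if "Nb c" "eqv w c" for c
        using K[of b c] b that esym etr by metis
      obtain p q where pq: "p\<in>V" "q\<in>V" "p\<noteq>q" "eqv p q" "d b p = d b q"
        using nSu[OF bV] unfolding eqv_def by blast
      have "p \<noteq> b" "q \<noteq> b" using uv[of b p q] pq bV by auto
      then show False using pairs[OF pq(1-4)] False nvw uniqb by metis
    qed
  qed
qed

theorem theorem9:
  fixes V :: "'a set" and E :: "'a set set" and n k :: nat
  assumes "simple_graph V E"
    and "connected_graph V E"
    and "card V = n" and "n \<ge> 3"
    and "card (forced_vertices V E) = k" and "k > 0"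
  shows "2 * card E + 4 * k \<le> n * (n - 1)"
proof -
  note sg = assms(1) and cg = assms(2)
  have finV: "finite V" using sg unfolding simple_graph_def by auto
  have resV: "resolving_set V E V"
    unfolding resolving_set_def using gd0[OF cg] by (metis order_refl)
  have "\<exists>R. resolving_set V E R \<and> card R = metric_dim V E"
    unfolding metric_dim_def by (rule LeastI_ex) (use resV in blast)
  then obtain R where R: "resolving_set V E R" "card R = metric_dim V E" by blast
  have RV: "R \<subseteq> V" using R unfolding resolving_set_def by auto
  have finR: "finite R" using RV finV finite_subset by auto
  have minim: "metric_dim V E \<le> card T" if "resolving_set V E T" for T
    unfolding metric_dim_def by (rule Least_le) (use that in blast)
  define F where "F = forced_vertices V E"
  have FR: "F \<subseteq> R" using R unfolding F_def forced_vertices_def basis_forced_def metric_basis_def by auto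
  define N where "N v = {u \<in> V - R. {v,u} \<notin> E}" for v
  have finN: "finite (N v)" for v using finV unfolding N_def by auto
  have two: "2 \<le> card (N v)" if vF: "v \<in> F" for v
  proof (rule ccontr)
    assume "\<not> 2 \<le> card (N v)"
    then have "card (N v) \<le> Suc 0" by auto
    then have all: "\<forall>a\<in>N v. \<forall>b\<in>N v. a = b" using card_le_Suc0_iff_eq[OF finN] by blast
    obtain w where w: "\<And>u. u \<in> N v \<Longrightarrow> u = w"
      using all by (cases "N v = {}") auto
    have vR: "v \<in> R" using vF FR by auto
    have forced: "\<And>T. metric_basis V E T \<Longrightarrow> v \<in> T"
      using vF unfolding F_def forced_vertices_def basis_forced_def by auto
    show False
    proof (rule core[where d = "gdist V E" and V = V and E = E and R = R and v = v and w = w])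
      show "\<And>x y. x\<in>V \<Longrightarrow> y\<in>V \<Longrightarrow> gdist V E x y = 0 \<longleftrightarrow> x = y" by (rule gd0[OF cg])
      show "\<And>x y. x\<in>V \<Longrightarrow> y\<in>V \<Longrightarrow> gdist V E x y = 1 \<longleftrightarrow> x \<noteq> y \<and> {x,y}\<in>E" by (rule gd1[OF cg])
      show "R \<subseteq> V" by fact
      show "v \<in> R" by fact
      show "\<And>x y. x\<in>V \<Longrightarrow> y\<in>V \<Longrightarrow> x\<noteq>y \<Longrightarrow> \<exists>r\<in>R. gdist V E r x \<noteq> gdist V E r y"
        using R unfolding resolving_set_def by blast
      show "\<And>u. u\<in>V-R \<Longrightarrow> {v,u}\<notin>E \<Longrightarrow> u = w" using w unfolding N_def by blast
      show "\<exists>x\<in>V. \<exists>y\<in>V. x\<noteq>y \<and> (\<forall>r\<in>R-{v}. gdist V E r x = gdist V E r y)"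
      proof (rule ccontr)
        assume "\<not> ?thesis"
        then have "resolving_set V E (R - {v})" using RV unfolding resolving_set_def by blast
        then have "metric_dim V E \<le> card (R - {v})" by (rule minim)
        moreover have "card (R - {v}) < card R" using finR vR by (meson card_Diff1_less)
        ultimately show False using R by auto
      qed
      show "\<exists>x\<in>V. \<exists>y\<in>V. x\<noteq>y \<and> (\<forall>r\<in>R-{v}. gdist V E r x = gdist V E r y) \<and> gdist V E u x = gdist V E u y"
        if u: "u \<in> V - R" for u
      proof (rule ccontr)
        assume "\<not> ?thesis"
        then have rs: "resolving_set V E (insert u (R - {v}))" using RV u unfolding resolving_set_def by blast
        have "card (insert u (R - {v})) = card R" using finR vR u
          by (simp add: card_Diff1_less) (metis One_nat_def Suc_pred card_gt_0_iff empty_iff)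
        then have "metric_basis V E (insert u (R - {v}))" using rs R unfolding metric_basis_def by simp
        then have "v \<in> insert u (R - {v})" by (rule forced)
        then show False using u vR by auto
      qed
    qed
  qed
  define P where "P = (\<lambda>(v,u). {v,u}) ` (SIGMA v:F. N v)"
  have finF: "finite F" using FR finR finite_subset by auto
  have inj: "inj_on (\<lambda>(v,u). {v,u}) (SIGMA v:F. N v)"
  proof (rule inj_onI, clarify)
    fix v u v' u' assume h: "v \<in> F" "u \<in> N v" "v' \<in> F" "u' \<in> N v'" "{v,u} = {v',u'}"
    then have "v \<in> R" "v' \<in> R" "u \<notin> R" "u' \<notin> R" using FR unfolding N_def by auto
    then show "v = v' \<and> u = u'" using h(5) by (metis doubleton_eq_iff)
  qed
  have "card P = (\<Sum>v\<in>F. card (N v))"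
    unfolding P_def using card_image[OF inj] finF finN by simp
  moreover have "(\<Sum>v\<in>F. 2) \<le> (\<Sum>v\<in>F. card (N v))" using two by (rule sum_mono)
  ultimately have cP: "2 * k \<le> card P" using assms(5) unfolding F_def by simp
  have sub: "E \<union> P \<subseteq> {B. B \<subseteq> V \<and> card B = 2}"
  proof -
    have "E \<subseteq> {B. B \<subseteq> V \<and> card B = 2}" using sg unfolding simple_graph_def by auto
    moreover have "P \<subseteq> {B. B \<subseteq> V \<and> card B = 2}"
    proof
      fix e assume "e \<in> P"
      then obtain v u where "v \<in> F" "u \<in> N v" "e = {v,u}" unfolding P_def by auto
      moreover then have "v \<in> V" "u \<in> V" "v \<noteq> u" using FR RV unfolding N_def by auto
      ultimately show "e \<in> {B. B \<subseteq> V \<and> card B = 2}" by auto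
    qed
    ultimately show ?thesis by auto
  qed
  have disj: "E \<inter> P = {}" unfolding P_def N_def by auto
  have fin2: "finite {B. B \<subseteq> V \<and> card B = 2}" using finV by auto
  have "card (E \<union> P) \<le> card V choose 2"
    using card_mono[OF fin2 sub] n_subsets[OF finV, of 2] by simp
  moreover have "card (E \<union> P) = card E + card P"
    using card_Un_disjoint[OF _ _ disj] finite_subset[OF sub fin2] by auto
  ultimately have "card E + card P \<le> n choose 2" using assms(3) by simp
  then have "2 * card E + 4 * k \<le> 2 * (n choose 2)" using cP by linarith
  also have "2 * (n choose 2) = n * (n - 1)"
  proof -
    have "even (n * (n - 1))" by (cases "even n") (auto simp: even_mult_iff)
    then show ?thesis unfolding choose_two by simp
  qed
  finally show ?thesis .
qed

end
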